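(* For $n\ge 2$ and $1\le m\le n$, $$s_u(n,m)\le\frac{(n-1)!}{(m-1)!}\big(H(n-1)\big)^{m-1},$$ where $s_u(n,m)$ are the unsigned Stirling numbers of the first kind and $H(N)=\sum_{i=1}^N\frac1i$. *)

theory Defs
  imports "HOL-Analysis.Analysis" "HOL-Combinatorics.Stirling"
begin

end

theory Submission
  imports Defs
begin

lemma bern_aux:
  fixes a d :: real
  assumes "a \<ge> 0" "d \<ge> 0"
  shows "(a + d) ^ Suc j \<ge> a ^ Suc j + real (Suc j) * a ^ j * d"
proof (induction j)
  case 0
  then show ?case by simp
next
  case (Suc j)
  have "(a + d) ^ Suc (Suc j) = (a + d) * (a + d) ^ Suc j" by simp
  also have "\<dots> \<ge> (a + d) * (a ^ Suc j + real (Suc j) * a ^ j * d)"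
    using Suc assms by (intro mult_left_mono) auto
  finally have "(a + d) ^ Suc (Suc j) \<ge> (a + d) * (a ^ Suc j + real (Suc j) * a ^ j * d)" .
  moreover have "(a + d) * (a ^ Suc j + real (Suc j) * a ^ j * d) \<ge>
      a ^ Suc (Suc j) + real (Suc (Suc j)) * a ^ Suc j * d"
  proof -
    have "(a + d) * (a ^ Suc j + real (Suc j) * a ^ j * d) =
       a ^ Suc (Suc j) + real (Suc (Suc j)) * a ^ Suc j * d + real (Suc j) * a ^ j * d * d"
      by (simp add: algebra_simps)
    moreover have "real (Suc j) * a ^ j * d * d \<ge> 0" using assms by simp
    ultimately show ?thesis by linarith
  qed
  ultimately show ?case by linarith
qed

lemma main_aux:
  "real (stirling (Suc p) (Suc k)) \<le> fact p / fact k * (harm p :: real) ^ k"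
proof (induction p arbitrary: k)
  case 0
  then show ?case by (cases k) (auto simp: harm_altdef)
next
  case (Suc p)
  show ?case
  proof (cases k)
    case 0
    have "stirling (Suc (Suc p)) (Suc 0) = fact (Suc p)" by (rule stirling_Suc_n_1)
    then have "real (stirling (Suc (Suc p)) (Suc 0)) = fact (Suc p)" by (metis of_nat_fact)
    then show ?thesis using 0 by simp
  next
    case (Suc j)
    define H where "H = (harm p :: real)"
    have H0: "H \<ge> 0" unfolding H_def by (rule harm_nonneg)
    have hs: "harm (Suc p) = H + 1 / real (Suc p)"
      unfolding H_def by (simp add: harm_Suc divide_inverse)
    have rec: "real (stirling (Suc (Suc p)) (Suc k)) =
        real (Suc p) * real (stirling (Suc p) (Suc (Suc j))) + real (stirling (Suc p) (Suc j))"
    proof -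
      have "stirling (Suc (Suc p)) (Suc (Suc j)) = Suc p * stirling (Suc p) (Suc (Suc j)) + stirling (Suc p) (Suc j)"
        by (rule stirling.simps(4))
      then show ?thesis using Suc by (metis of_nat_add of_nat_mult)
    qed
    have ih1: "real (stirling (Suc p) (Suc (Suc j))) \<le> fact p / fact (Suc j) * H ^ Suc j"
      using Suc.IH[of "Suc j"] H_def by simp
    have ih2: "real (stirling (Suc p) (Suc j)) \<le> fact p / fact j * H ^ j"
      using Suc.IH[of j] H_def by simp
    have b: "(H + 1 / real (Suc p)) ^ Suc j \<ge> H ^ Suc j + real (Suc j) * H ^ j * (1 / real (Suc p))"
      using bern_aux[OF H0, of "1 / real (Suc p)"] by simp
    have "real (stirling (Suc (Suc p)) (Suc k)) \<le>
        real (Suc p) * (fact p / fact (Suc j) * H ^ Suc j) + fact p / fact j * H ^ j"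
      using rec ih1 ih2 by (smt (verit) mult_left_mono of_nat_0_le_iff)
    also have "\<dots> = fact (Suc p) / fact (Suc j) * (H ^ Suc j + real (Suc j) * H ^ j * (1 / real (Suc p)))"
      by (simp add: field_simps fact_Suc del: of_nat_Suc)
    also have "\<dots> \<le> fact (Suc p) / fact (Suc j) * (H + 1 / real (Suc p)) ^ Suc j"
      using b by (intro mult_left_mono) auto
    finally show ?thesis using Suc hs by simp
  qed
qed

theorem lemma5p1:
  fixes n m :: nat
  assumes "n \<ge> 2" and "1 \<le> m" and "m \<le> n"
  shows "real (stirling n m) \<le>
           fact (n - 1) / fact (m - 1) * (harm (n - 1) :: real) ^ (m - 1)"
proof -
  obtain p k where "n = Suc p" "m = Suc k" using assms
    by (metis Suc_le_D not0_implies_Suc not_one_le_zero)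
  then show ?thesis using main_aux[of p k] by simp
qed

end
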